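(* Let $H_{OK}=[h_1\cdots h_{18}]=[I_9\ M_{OK}]$ be the $9\times18$ binary matrix, where $I_9$ is the identity matrix ($h_i$ the $i$-th unit vector for $i\le9$) and $h_{10},\dots,h_{18}$ are, in order, the columns given in hexadecimal as 1A0, 174, A5, 173, 17, E8, 9, 18D, 1CE (each written as a 9-bit binary string, most significant bit as the top entry). Let $\mathcal P_{OK}$ be the partition of the column indices into the 11 subsets $\{1,2,4\},\{3\},\{5,8\},\{6,17\},\{7,10\},\{11,14\},\{12\},\{13,18\},\{15\},\{9\},\{16\}$. Then $\mathcal P_{OK}$ is a $(3,1)$-partition of $H_{OK}$: every vector of $\mathbb{F}_2^9$, including the zero vector, is the sum of at least one and at most three columns of $H_{OK}$ lying in pairwise distinct subsets of $\mathcal P_{OK}$. Moreover the $[18,9]_2$ code with parity-check matrix $H_{OK}$ has minimum distance $3$ and covering radius $3$ (so it is an $[18,9,3]_23,1$ code).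
   Context: For an $r\times n$ binary parity-check matrix $H$ and $0\le\ell\le R$, an $(R,\ell)$-partition is a partition of the columns of $H$ into nonempty subsets such that every vector of $\mathbb{F}_2^r$ (including zero) is the sum of at least $\ell$ and at most $R$ columns of $H$ lying in pairwise distinct subsets. An $[n,n-r,d]_2R,\ell$ code is a binary linear code of length $n$, codimension $r$, minimum distance $d$, covering radius $R$ (smallest $R$ such that every vector of $\mathbb{F}_2^r$ is a sum of at most $R$ columns of $H$), some parity-check matrix of which admits an $(R,\ell)$-partition. *)

theory Defs
  imports Main "HOL-Library.Z2"
begin

(* A binary r x n matrix H is given columnwise: H j i is the entry in row i of column j,
   with columns indexed by {1..n} and rows by {1..r}. *)

definition vecs :: "nat \<Rightarrow> (nat \<Rightarrow> bit) set" where
  "vecs r = {v. \<forall>i. i \<notin> {1..r} \<longrightarrow> v i = 0}"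

definition colsum :: "(nat \<Rightarrow> nat \<Rightarrow> bit) \<Rightarrow> nat set \<Rightarrow> (nat \<Rightarrow> bit)" where
  "colsum H S = (\<lambda>i. \<Sum>j\<in>S. H j i)"

definition is_col_partition :: "nat \<Rightarrow> nat set set \<Rightarrow> bool" where
  "is_col_partition n P \<longleftrightarrow>
     (\<forall>B\<in>P. B \<noteq> {}) \<and> \<Union>P = {1..n} \<and>
     (\<forall>B\<in>P. \<forall>C\<in>P. B \<noteq> C \<longrightarrow> B \<inter> C = {})"

definition transversal :: "nat set set \<Rightarrow> nat set \<Rightarrow> bool" where
  "transversal P S \<longleftrightarrow> (\<forall>B\<in>P. card (S \<inter> B) \<le> 1)"

definition is_Rl_partition ::
  "nat \<Rightarrow> nat \<Rightarrow> (nat \<Rightarrow> nat \<Rightarrow> bit) \<Rightarrow> nat \<Rightarrow> nat \<Rightarrow> nat set set \<Rightarrow> bool" where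
  "is_Rl_partition r n H R l P \<longleftrightarrow>
     l \<le> R \<and> is_col_partition n P \<and>
     (\<forall>v\<in>vecs r. \<exists>S. S \<subseteq> {1..n} \<and> transversal P S \<and>
        l \<le> card S \<and> card S \<le> R \<and> colsum H S = v)"

definition covering_radius :: "nat \<Rightarrow> nat \<Rightarrow> (nat \<Rightarrow> nat \<Rightarrow> bit) \<Rightarrow> nat" where
  "covering_radius r n H =
     (LEAST R. \<forall>v\<in>vecs r. \<exists>S. S \<subseteq> {1..n} \<and> card S \<le> R \<and> colsum H S = v)"

(* minimum distance of the binary code {x. H x^T = 0}: a codeword is identified with its
   support S \<subseteq> {1..n}; its weight is card S *)
definition min_distance :: "nat \<Rightarrow> (nat \<Rightarrow> nat \<Rightarrow> bit) \<Rightarrow> nat" where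
  "min_distance n H =
     (LEAST d. \<exists>S. S \<subseteq> {1..n} \<and> S \<noteq> {} \<and> card S = d \<and> colsum H S = (\<lambda>_. 0))"

(* hexadecimal values of columns h_10..h_18:
   1A0 = 416, 174 = 372, A5 = 165, 173 = 371, 17 = 23, E8 = 232, 9 = 9, 18D = 397, 1CE = 462 *)
definition M_OK_hex :: "nat list" where
  "M_OK_hex = [416, 372, 165, 371, 23, 232, 9, 397, 462]"

(* H_OK = [I_9 M_OK]; a column value c is written as a 9-bit string with the most significant
   bit as the top entry (row 1), so row i holds bit (9 - i) of c *)
definition H_OK :: "nat \<Rightarrow> nat \<Rightarrow> bit" where
  "H_OK j i =
     (if i \<in> {1..9} \<and> j \<in> {1..18} then
        (if j \<le> 9 then (if i = j then 1 else 0)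
         else of_nat ((M_OK_hex ! (j - 10)) div 2 ^ (9 - i) mod 2))
      else 0)"

definition P_OK :: "nat set set" where
  "P_OK = {{1,2,4},{3},{5,8},{6,17},{7,10},{11,14},{12},{13,18},{15},{9},{16}}"

end

theory Submission
  imports Defs
begin


definition colval :: "nat \<Rightarrow> nat" where
  "colval j = (if j \<le> 9 then 2 ^ (9 - j) else M_OK_hex ! (j - 10))"

definition xl :: "nat list \<Rightarrow> nat" where
  "xl xs = foldr (\<lambda>j a. xor (colval j) a) xs 0"

definition vec_of_nat :: "nat \<Rightarrow> nat \<Rightarrow> bit" where
  "vec_of_nat n = (\<lambda>i. if i \<in> {1..9} then of_bool (bit n (9 - i)) else 0)"

lemma of_nat_mod2_bit: "(of_nat (x mod 2) :: bit) = of_bool (odd x)"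
  by (cases "even x") (auto simp: even_iff_mod_2_eq_zero odd_iff_mod_2_eq_one)

lemma H_col: "j \<in> {1..18} \<Longrightarrow> H_OK j = vec_of_nat (colval j)"
proof
  fix i assume j: "j \<in> {1..18}"
  show "H_OK j i = vec_of_nat (colval j) i"
  proof (cases "i \<in> {1..9}")
    case True
    show ?thesis
    proof (cases "j \<le> 9")
      case True
      then show ?thesis using j \<open>i \<in> {1..9}\<close>
        by (auto simp: H_OK_def vec_of_nat_def colval_def bit_exp_iff)
    next
      case False
      then show ?thesis using j \<open>i \<in> {1..9}\<close>
        by (simp add: H_OK_def vec_of_nat_def colval_def bit_iff_odd of_nat_mod2_bit)
    qed
  next
    case False
    then show ?thesis by (auto simp: H_OK_def vec_of_nat_def)
  qed
qed

lemma vec_xor: "vec_of_nat (xor a b) = (\<lambda>i. vec_of_nat a i + vec_of_nat b i)"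
  by (auto simp: vec_of_nat_def bit_xor_iff)

lemma vec_zero: "vec_of_nat 0 = (\<lambda>_. 0)"
  by (auto simp: vec_of_nat_def)

lemma colsum_list:
  "distinct xs \<Longrightarrow> set xs \<subseteq> {1..18} \<Longrightarrow> colsum H_OK (set xs) = vec_of_nat (xl xs)"
proof (induction xs)
  case Nil
  then show ?case by (simp add: colsum_def xl_def vec_zero)
next
  case (Cons x xs)
  have "colsum H_OK (set (x # xs)) = (\<lambda>i. H_OK x i + colsum H_OK (set xs) i)"
    using Cons.prems by (simp add: colsum_def)
  also have "\<dots> = vec_of_nat (xl (x # xs))"
    using Cons by (simp add: H_col xl_def vec_xor)
  finally show ?case .
qed

lemma vec_inj: "a < 512 \<Longrightarrow> b < 512 \<Longrightarrow> vec_of_nat a = vec_of_nat b \<Longrightarrow> a = b"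
proof (rule bit_eqI)
  fix k assume a: "a < 512" and b: "b < 512" and e: "vec_of_nat a = vec_of_nat b"
  show "bit a k \<longleftrightarrow> bit b k"
  proof (cases "k < 9")
    case True
    have "vec_of_nat a (9 - k) = vec_of_nat b (9 - k)" using e by simp
    moreover have "9 - (9 - k) = k" "9 - k \<in> {1..9}" using True by auto
    ultimately have "(of_bool (bit a k) :: bit) = of_bool (bit b k)" by (simp add: vec_of_nat_def)
    then show ?thesis by (cases "bit a k"; cases "bit b k") auto
  next
    case False
    have "take_bit 9 a = a" "take_bit 9 b = b" using a b by (simp_all add: take_bit_nat_eq_self_iff)
    then show ?thesis using False by (metis bit_take_bit_iff)
  qed
qed

lemma vec_lt: "(a::nat) < 512 \<Longrightarrow> b < 512 \<Longrightarrow> xor a b < 512"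
proof -
  assume "a < 512" "b < 512"
  then have "take_bit 9 a = a" "take_bit 9 b = b" by (simp_all add: take_bit_nat_eq_self_iff)
  then have "take_bit 9 (xor a b) = xor a b" by (metis take_bit_xor)
  then have "xor a b < 2 ^ 9" by (simp only: take_bit_nat_eq_self_iff)
  then show ?thesis by simp
qed

lemma vec_surj: "v \<in> vecs 9 \<Longrightarrow> \<exists>n<512. v = vec_of_nat n"
proof -
  assume v: "v \<in> vecs 9"
  define bs where "bs = map (\<lambda>k. v (9 - k) = 1) [0..<9]"
  define n :: nat where "n = horner_sum of_bool 2 bs"
  have "take_bit 9 n = n" unfolding n_def take_bit_horner_sum_bit_eq by (simp add: bs_def)
  then have "n < 512" by (simp add: take_bit_nat_eq_self_iff)
  moreover have "v = vec_of_nat n"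
  proof
    fix i show "v i = vec_of_nat n i"
    proof (cases "i \<in> {1..9}")
      case True
      then have "bit n (9 - i) \<longleftrightarrow> v i = 1"
        by (auto simp: n_def bs_def bit_horner_sum_bit_iff)
      then show ?thesis using True by (cases "v i") (auto simp: vec_of_nat_def)
    next
      case False
      then show ?thesis using v by (auto simp: vecs_def vec_of_nat_def)
    qed
  qed
  ultimately show ?thesis by blast
qed


definition blk :: "nat \<Rightarrow> nat" where
  "blk j = (if j \<in> {1,2,4} then 0 else if j = 3 then 1 else if j \<in> {5,8} then 2
    else if j \<in> {6,17} then 3 else if j \<in> {7,10} then 4 else if j \<in> {11,14} then 5
    else if j = 12 then 6 else if j \<in> {13,18} then 7 else if j = 15 then 8
    else if j = 9 then 9 else if j = 16 then 10 else 11)"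

definition goodw :: "nat list \<Rightarrow> bool" where
  "goodw xs = (xs \<noteq> [] \<and> length xs \<le> 3 \<and> distinct xs \<and> list_all (\<lambda>j. 1 \<le> j \<and> j \<le> 18) xs
     \<and> distinct (map blk xs))"
definition Wit :: "nat list list" where
  "Wit = [[6,9,16], [9], [8], [8,9], [7], [7,9], [7,8], [5,14], [6], [16], [6,8], [8,16], [6,7], [7,16], [5,14,16], [5,6,14], [5], [5,9], [7,9,14], [7,14], [5,7], [8,14], [9,14], [14], [5,6], [5,16], [7,14,16], [6,7,14], [5,6,7], [5,7,16], [14,16], [6,14], [4], [4,9], [4,8], [4,8,9], [4,7], [2,12], [1,15,18], [2,8,12], [4,6], [4,16], [4,6,8], [4,8,16], [2,12,16], [10,17], [3,10,18], [8,10,17], [4,5], [4,5,9], [2,12,14], [1,3,13], [1,3,11], [2,5,12], [4,9,14], [4,14], [4,5,6], [4,5,16], [2,11,18], [10,13,15], [10,11,15], [5,10,17], [4,14,16], [4,6,14], [3], [3,9], [3,8], [17,18], [3,7], [3,7,9], [3,7,8], [3,5,14], [3,6], [3,16], [3,6,8], [3,8,16], [3,6,7], [12,15], [4,10,18], [8,12,15], [3,5], [3,5,9], [11,15,18], [2,10,13], [2,10,11], [3,8,14], [3,9,14], [3,14], [3,5,6], [3,5,16], [12,14,15], [12,13,17], [11,12,17], [5,12,15], [3,14,16], [3,6,14], [3,4], [2,15,16], [3,4,8], [1,5,13], [1,5,11], [1,15,17], [6,10,18], [10,16,18], [2,15], [2,9,15], [2,8,15], [1,12,18], [2,7,15], [3,10,17],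 [10,18], [9,10,18], [1,7,11], [1,8,13], [1,9,13], [1,13], [1,11], [1,9,11], [1,8,11], [1,7,13], [2,5,15], [2,11,17], [1,13,16], [1,6,13], [1,6,11], [1,11,16], [2,13,17], [2,14,15], [2], [2,9], [2,8], [2,8,9], [2,7], [4,12], [2,7,8], [2,5,14], [2,6], [2,16], [2,6,8], [2,8,16], [1,9,17], [1,17], [1,3,18], [1,8,17], [2,5], [2,5,9], [4,12,14], [2,7,14], [2,5,7], [2,8,14], [2,9,14], [2,14], [2,5,6], [2,5,16], [1,14,17], [1,13,15], [1,11,15], [1,5,17], [2,14,16], [2,6,14], [1,10], [7,12], [1,8,10], [7,8,12], [9,12], [12], [8,9,12], [8,12], [3,15], [1,10,16], [3,8,15], [15,17,18], [12,16], [6,12], [8,12,16], [6,8,12], [1,5,10], [5,7,12], [12,14], [9,12,14], [5,9,12], [5,12], [7,12,14], [1,10,14], [3,5,15], [3,11,17], [11,18], [9,11,18], [5,12,16], [5,6,12], [3,13,17], [3,14,15], [2,3], [2,3,9], [2,3,8], [2,17,18], [2,3,7], [3,4,12], [1,6,18], [1,16,18], [4,15], [2,3,16], [1,7,18], [10,12,18], [1,8,18], [1,3,17], [1,18], [1,9,18], [2,3,5], [1,11,12], [9,10,13], [10,13], [10,11], [9,10,11], [1,12,13], [2,3,14], [4,5,15], [1,14,18], [10,13,16], [6,10,13], [6,10,11], [10,11,16], [1,5,18], [4,14,15], [6,15], [15,16], [6,8,15], [8,15,16], [3,9,12], [3,12], [12,17,18], [3,8,12], [15], [9,15], [8,15],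 [8,9,15], [7,15], [3,6,12], [2,10,18], [5,14,15], [5,6,15], [5,15,16], [3,12,14], [4,10,13], [4,10,11], [3,5,12], [14,15,16], [6,14,15], [5,15], [11,17], [3,11,18], [7,14,15], [5,7,15], [7,11,17], [13,17], [14,15], [1], [1,9], [1,8], [1,8,9], [1,7], [10,12], [1,7,8], [1,5,14], [1,6], [1,16], [1,6,8], [1,8,16], [1,6,7], [2,17], [2,3,18], [2,8,17], [1,5], [1,5,9], [10,12,14], [1,7,14], [1,5,7], [1,8,14], [1,9,14], [1,14], [1,5,6], [1,5,16], [2,14,17], [2,13,15], [2,11,15], [2,5,17], [1,14,16], [1,6,14], [2,10], [2,9,10], [2,8,10], [3,5,13], [3,5,11], [3,15,17], [15,18], [9,15,18], [12,17], [2,10,16], [8,12,17], [3,12,18], [7,12,17], [1,10,17], [6,15,18], [15,16,18], [2,5,10], [3,8,13], [3,9,13], [3,13], [3,11], [3,9,11], [3,8,11], [2,10,14], [5,12,17], [11,12,15], [3,13,16], [3,6,13], [3,6,11], [3,11,16], [12,13,15], [12,14,17], [1,3], [1,3,9], [1,3,8], [1,17,18], [1,3,7], [3,10,12], [2,6,18], [2,16,18], [10,15], [1,3,16], [2,7,18], [4,12,18], [2,8,18], [1,12,15], [2,18], [2,9,18], [1,3,5], [2,11,12], [4,9,13], [4,13], [4,11], [4,9,11], [2,12,13], [1,3,14], [5,10,15], [2,14,18], [4,13,16], [4,6,13], [4,6,11], [4,11,16], [2,5,18], [10,14,15], [2,3,10], [7,15,17], [5,9,13], [5,13], [5,11], [15,17],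 [3,15,18], [5,7,13], [3,12,17], [8,12,18], [5,13,16], [12,18], [5,6,11], [5,11,16], [1,10,18], [7,12,18], [7,11], [8,13], [9,13], [13], [11], [9,11], [8,11], [7,13], [6,7,11], [6,8,13], [13,16], [6,13], [6,11], [11,16], [6,8,11], [6,7,13], [4,10], [4,9,10], [4,8,10], [12,15,18], [16,17], [2,10,12], [3,6,18], [3,16,18], [4,6,10], [7,17], [3,7,18], [5,13,15], [9,17], [17], [3,18], [8,17], [4,5,10], [3,11,12], [13,15,16], [6,13,15], [5,16,17], [11,15,16], [3,12,13], [4,10,14], [7,11,15], [3,14,18], [14,17], [13,15], [11,15], [5,17], [3,5,18], [7,13,15], [10], [9,10], [8,10], [8,9,10], [1,9,12], [1,12], [2,15,18], [1,8,12], [6,10], [10,16], [6,8,10], [8,10,16], [1,12,16], [4,17], [3,4,18], [4,8,17], [5,10], [5,9,10], [1,12,14], [2,3,13], [2,3,11], [1,5,12], [9,10,14], [10,14], [5,6,10], [5,10,16], [1,11,18], [4,13,15], [4,11,15], [4,5,17], [10,14,16], [6,10,14], [3,4,10], [5,11,12], [6,7,18], [7,16,18], [3,16,17], [8,16,18], [6,18], [16,18], [2,10,15], [3,7,17], [7,18], [7,9,18], [8,18], [3,17], [18], [9,18], [9,11,12], [11,12], [7,12,13], [1,10,13], [1,10,11], [7,11,12], [12,13], [5,16,18], [9,14,18], [14,18], [3,14,17], [3,13,15], [3,11,15], [3,5,17], [5,18], [5,9,18], [3,10], [1,15,16], [3,8,10], [2,5,13], [2,5,11], [1,3,12], [4,6,18],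 [4,16,18], [1,15], [1,9,15], [1,8,15], [2,12,18], [1,7,15], [3,4,17], [4,18], [4,9,18], [2,7,11], [2,8,13], [2,9,13], [2,13], [2,11], [2,9,11], [2,8,11], [2,7,13], [1,5,15], [1,11,17], [2,13,16], [2,6,13], [2,6,11], [2,11,16], [1,13,17], [1,14,15]]"
lemma wit_xl: "map xl Wit = [0..<512]"
  by (simp add: Wit_def xl_def colval_def M_OK_hex_def upt_rec)
lemma wit_good: "list_all goodw Wit"
  by (simp add: Wit_def goodw_def blk_def)

lemma comp_fact: "list_all (\<lambda>a. colval a < 512 \<and> colval a \<noteq> 0 \<and> colval a \<noteq> 14 \<and>
   list_all (\<lambda>b. a = b \<or> (xor (colval a) (colval b) \<noteq> 0 \<and> xor (colval a) (colval b) \<noteq> 14)) [1..<19]) [1..<19]"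
  by (simp add: colval_def M_OK_hex_def upt_rec)

lemma comp_fact': "a \<in> {1..18} \<Longrightarrow> colval a < 512 \<and> colval a \<noteq> 0 \<and> colval a \<noteq> 14 \<and>
   (\<forall>b\<in>{1..18}. a \<noteq> b \<longrightarrow> xor (colval a) (colval b) \<noteq> 0 \<and> xor (colval a) (colval b) \<noteq> 14)"
proof -
  assume a: "a \<in> {1..18}"
  have e: "{1..18::nat} = set [1..<19]" by auto
  show ?thesis using comp_fact a unfolding e list_all_iff by blast
qed

lemma xl_lt: "set xs \<subseteq> {1..18} \<Longrightarrow> xl xs < 512"
proof (induction xs)
  case Nil then show ?case by (simp add: xl_def)
next
  case (Cons x xs)
  then have "colval x < 512" "xl xs < 512" using comp_fact' by auto
  then show ?case using vec_lt by (simp add: xl_def)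
qed

lemma small_xl: "distinct xs \<Longrightarrow> set xs \<subseteq> {1..18} \<Longrightarrow> length xs \<le> 2 \<Longrightarrow>
   xl xs \<noteq> 14 \<and> (xs \<noteq> [] \<longrightarrow> xl xs \<noteq> 0)"
proof -
  assume d: "distinct xs" and s: "set xs \<subseteq> {1..18}" and l: "length xs \<le> 2"
  show ?thesis
  proof (cases xs)
    case Nil then show ?thesis by (simp add: xl_def)
  next
    case (Cons a ys)
    then show ?thesis
    proof (cases ys)
      case Nil
      then show ?thesis using Cons s comp_fact'[of a] by (simp add: xl_def)
    next
      case (Cons b zs)
      then have "zs = []" using \<open>xs = a # ys\<close> l by simp
      then show ?thesis using Cons \<open>xs = a # ys\<close> s d comp_fact'[of a] by (simp add: xl_def)
    qed
  qed
qed

lemma blk_P0: "\<forall>B\<in>P_OK. \<forall>x\<in>B. \<forall>y\<in>B. blk x = blk y"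
  unfolding P_OK_def by (simp add: blk_def)
lemma blk_P: "B \<in> P_OK \<Longrightarrow> x \<in> B \<Longrightarrow> y \<in> B \<Longrightarrow> blk x = blk y"
  using blk_P0 by blast

lemma transv: "distinct (map blk xs) \<Longrightarrow> transversal P_OK (set xs)"
  unfolding transversal_def
proof
  fix B assume d: "distinct (map blk xs)" and B: "B \<in> P_OK"
  have inj: "inj_on blk (set xs)" using d by (simp add: distinct_map)
  have "\<forall>x\<in>set xs \<inter> B. \<forall>y\<in>set xs \<inter> B. x = y"
  proof (intro ballI)
    fix x y assume x: "x \<in> set xs \<inter> B" and y: "y \<in> set xs \<inter> B"
    then have "blk x = blk y" using blk_P[OF B] by blast
    then show "x = y" using inj x y by (meson IntD1 inj_onD)
  qed
  moreover have "finite (set xs \<inter> B)" by simp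
  ultimately show "card (set xs \<inter> B) \<le> 1" using card_le_Suc0_iff_eq by (metis One_nat_def)
qed

lemma p1: "\<forall>B\<in>P_OK. B \<noteq> {}" by (simp add: P_OK_def)
lemma p2: "\<forall>B\<in>P_OK. \<forall>C\<in>P_OK. B \<noteq> C \<longrightarrow> B \<inter> C = {}"
  unfolding P_OK_def by (simp add: Int_insert_left)
lemma p3: "\<Union>P_OK = {1..18}"
proof
  show "\<Union>P_OK \<subseteq> {1..18}" by (auto simp: P_OK_def)
  show "{1..18} \<subseteq> \<Union>P_OK"
  proof
    fix x :: nat assume "x \<in> {1..18}"
    then have "x \<in> set [1..<19]" by simp
    then show "x \<in> \<Union>P_OK" by (simp add: upt_rec P_OK_def) (elim disjE; simp)
  qed
qed

lemma part: "is_col_partition 18 P_OK"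
  unfolding is_col_partition_def using p1 p2 p3 by (intro conjI)

lemma vecs_vec: "vec_of_nat n \<in> vecs 9"
  by (simp add: vecs_def vec_of_nat_def)

lemma get_list: "(S::nat set) \<subseteq> {1..18} \<Longrightarrow> \<exists>xs. distinct xs \<and> set xs = S \<and> length xs = card S"
proof -
  assume a: "S \<subseteq> {1..18}"
  have "finite S" by (rule finite_subset[OF a finite_atLeastAtMost])
  then obtain xs where d: "distinct xs" and e: "set xs = S" using finite_distinct_list by metis
  have "card S = length xs" using distinct_card[OF d] e by simp
  then show ?thesis using d e by (intro exI[of _ xs]) simp
qed

lemma partA: "\<forall>v\<in>vecs 9. \<exists>S. S \<subseteq> {1..18} \<and> transversal P_OK S \<and>
        1 \<le> card S \<and> card S \<le> 3 \<and> colsum H_OK S = v"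
proof
  fix v assume "v \<in> vecs 9"
  then obtain n where n: "n < 512" "v = vec_of_nat n" using vec_surj by blast
  have len: "length Wit = 512"
  proof -
    have "length (map xl Wit) = length [0..<512]" by (simp only: wit_xl)
    then show ?thesis by (simp only: length_map length_upt)
  qed
  define xs where "xs = Wit ! n"
  have nl: "n < length Wit" by (subst len) (rule n)
  have "\<forall>i<length Wit. goodw (Wit ! i)" using wit_good by (simp only: list_all_length)
  then have g: "goodw xs" unfolding xs_def using nl by blast
  have "xl xs = map xl Wit ! n" unfolding xs_def by (rule nth_map[OF nl, symmetric])
  also have "\<dots> = [0..<512] ! n" by (simp only: wit_xl)
  also have "\<dots> = n" using n by (simp only: nth_upt add_0)
  finally have x: "xl xs = n" .
  have s: "set xs \<subseteq> {1..18}" using g by (auto simp: goodw_def list_all_iff)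
  have c: "card (set xs) = length xs" using g by (simp add: goodw_def distinct_card)
  have t: "transversal P_OK (set xs)" using g transv by (simp add: goodw_def)
  have cs: "colsum H_OK (set xs) = v" using colsum_list[of xs] g s x n by (simp add: goodw_def)
  have l: "1 \<le> length xs" "length xs \<le> 3" using g by (auto simp: goodw_def Suc_le_eq)
  show "\<exists>S. S \<subseteq> {1..18} \<and> transversal P_OK S \<and>
        1 \<le> card S \<and> card S \<le> 3 \<and> colsum H_OK S = v"
    using s t cs l c by (intro exI[of _ "set xs"] conjI) simp_all
qed

theorem theorem7p1:
  shows "is_Rl_partition 9 18 H_OK 3 1 P_OK
         \<and> min_distance 18 H_OK = 3
         \<and> covering_radius 9 18 H_OK = 3"
proof (intro conjI)
  show "is_Rl_partition 9 18 H_OK 3 1 P_OK"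
    unfolding is_Rl_partition_def using part partA by simp
next
  show "min_distance 18 H_OK = 3"
    unfolding min_distance_def
  proof (rule Least_equality)
    have "colsum H_OK (set [6,9,16]) = vec_of_nat (xl [6,9,16])"
      by (rule colsum_list) auto
    also have "xl [6,9,16] = 0" by (simp add: xl_def colval_def M_OK_hex_def)
    finally have "colsum H_OK {6,9,16} = (\<lambda>_. 0)" by (simp add: vec_zero)
    then show "\<exists>S\<subseteq>{1..18}. S \<noteq> {} \<and> card S = 3 \<and> colsum H_OK S = (\<lambda>_. 0)"
      by (intro exI[of _ "{6,9,16}"]) auto
  next
    fix y assume "\<exists>S\<subseteq>{1..18}. S \<noteq> {} \<and> card S = y \<and> colsum H_OK S = (\<lambda>_. 0)"
    then obtain S where S: "S \<subseteq> {1..18}" "S \<noteq> {}" "card S = y" "colsum H_OK S = (\<lambda>_. 0)" by blast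
    obtain xs where xs: "distinct xs" "set xs = S" "length xs = card S" using get_list[OF S(1)] by blast
    show "3 \<le> y"
    proof (rule ccontr)
      assume "\<not> 3 \<le> y"
      then have l: "length xs \<le> 2" using xs S by simp
      have "vec_of_nat (xl xs) = vec_of_nat 0" using colsum_list[of xs] xs S by (simp add: vec_zero)
      moreover have "xl xs < 512" using xl_lt xs S by blast
      ultimately have "xl xs = 0" using vec_inj[of "xl xs" 0] by simp
      moreover have "xs \<noteq> []" using xs S by auto
      ultimately show False using small_xl[OF xs(1) _ l] xs S by auto
    qed
  qed
next
  show "covering_radius 9 18 H_OK = 3"
    unfolding covering_radius_def
  proof (rule Least_equality)
    show "\<forall>v\<in>vecs 9. \<exists>S\<subseteq>{1..18}. card S \<le> 3 \<and> colsum H_OK S = v"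
      using partA by blast
  next
    fix y assume h: "\<forall>v\<in>vecs 9. \<exists>S\<subseteq>{1..18}. card S \<le> y \<and> colsum H_OK S = v"
    show "3 \<le> y"
    proof (rule ccontr)
      assume "\<not> 3 \<le> y"
      obtain S where S: "S \<subseteq> {1..18}" "card S \<le> y" "colsum H_OK S = vec_of_nat 14"
        using h vecs_vec by blast
      obtain xs where xs: "distinct xs" "set xs = S" "length xs = card S" using get_list[OF S(1)] by blast
      have l: "length xs \<le> 2" using xs S \<open>\<not> 3 \<le> y\<close> by simp
      have "vec_of_nat (xl xs) = vec_of_nat 14" using colsum_list[of xs] xs S by simp
      moreover have "xl xs < 512" using xl_lt xs S by blast
      ultimately have "xl xs = 14" using vec_inj[of "xl xs" 14] by simp
      then show False using small_xl[OF xs(1) _ l] xs S by auto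
    qed
  qed
qed

end
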